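(* Let $\alpha\in(0,1)\cup(1,\infty)$ and let $W$ be a BISO channel, $BSC$ a binary symmetric channel and $BEC$ a binary erasure channel, all three with the same $\alpha$-capacity. If $\alpha>1$, or $\frac12\le\alpha<1$, or $0<\alpha\le\frac13$, then $BEC$ is $\alpha$-more capable than $W$ and $W$ is $\alpha$-more capable than $BSC$. If $\frac13\le\alpha\le\frac12$, then $BSC$ is $\alpha$-more capable than $W$ and $W$ is $\alpha$-more capable than $BEC$.
   Context: A binary input symmetric output (BISO) channel has input alphabet $\{0,1\}$ and a finite output alphabet $\{0,\pm1,\dots,\pm l\}$ with $P_{Y|X}(y|0)=P_{Y|X}(-y|1)$ for all $y$. The binary symmetric channel with crossover probability $\delta$ has output alphabet $\{0,1\}$ and flips the input with probability $\delta$; the binary erasure channel with erasure probability $\epsilon$ outputs the input with probability $1-\epsilon$ and an erasure symbol with probability $\epsilon$; both are BISO channels. Sibson's Rényi mutual information of an input distribution $P_X$ on $\{0,1\}$ and channel $P_{Y|X}$ is $I^S_\alpha(X:Y)=\frac{\alpha}{\alpha-1}\log\sum_y\big(\sum_x P_X(x)P_{Y|X}(y|x)^\alpha\big)^{1/\alpha}$; the $\alpha$-capacity is $C_\alpha(P_{Y|X})=\sup_{P_X}I^S_\alpha(X:Y)$. A channel $W_1:X\mapsto Y_1$ is $\alpha$-more capable than $W_2:X\mapsto Y_2$ if $I^S_\alpha(X:Y_1)\ge I^S_\alpha(X:Y_2)$ for every input distribution $P_X$. *)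

theory Defs
  imports Complex_Main
begin

text \<open>Binary inputs are modelled by bool (False = 0, True = 1). A channel is a
  transition function W :: bool => int => real together with a finite output set Y.\<close>

definition input_dist :: "(bool \<Rightarrow> real) \<Rightarrow> bool" where
  "input_dist P \<longleftrightarrow> (\<forall>x. P x \<ge> 0) \<and> P False + P True = 1"

definition sibson_MI :: "real \<Rightarrow> (bool \<Rightarrow> real) \<Rightarrow> (bool \<Rightarrow> int \<Rightarrow> real) \<Rightarrow> int set \<Rightarrow> real" where
  "sibson_MI \<alpha> P W Y =
     \<alpha> / (\<alpha> - 1) * ln (\<Sum>y\<in>Y. (\<Sum>x\<in>UNIV. P x * (W x y) powr \<alpha>) powr (1 / \<alpha>))"

definition alpha_capacity :: "real \<Rightarrow> (bool \<Rightarrow> int \<Rightarrow> real) \<Rightarrow> int set \<Rightarrow> real" where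
  "alpha_capacity \<alpha> W Y = (SUP P \<in> {P. input_dist P}. sibson_MI \<alpha> P W Y)"

definition more_capable ::
  "real \<Rightarrow> (bool \<Rightarrow> int \<Rightarrow> real) \<Rightarrow> int set \<Rightarrow> (bool \<Rightarrow> int \<Rightarrow> real) \<Rightarrow> int set \<Rightarrow> bool" where
  "more_capable \<alpha> W1 Y1 W2 Y2 \<longleftrightarrow>
     (\<forall>P. input_dist P \<longrightarrow> sibson_MI \<alpha> P W1 Y1 \<ge> sibson_MI \<alpha> P W2 Y2)"

definition biso_out :: "nat \<Rightarrow> int set" where
  "biso_out l = {- int l .. int l}"

definition is_biso :: "nat \<Rightarrow> (bool \<Rightarrow> int \<Rightarrow> real) \<Rightarrow> bool" where
  "is_biso l W \<longleftrightarrow>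
     (\<forall>x y. W x y \<ge> 0) \<and> (\<forall>x y. y \<notin> biso_out l \<longrightarrow> W x y = 0) \<and>
     (\<forall>x. (\<Sum>y\<in>biso_out l. W x y) = 1) \<and> (\<forall>y. W False y = W True (- y))"

text \<open>BSC: outputs {0,1}; BEC: outputs {0,1,2}, 2 being the erasure symbol.\<close>
definition bit :: "bool \<Rightarrow> int" where "bit x = (if x then 1 else 0)"

definition BSC :: "real \<Rightarrow> bool \<Rightarrow> int \<Rightarrow> real" where
  "BSC \<delta> x y = (if y = bit x then 1 - \<delta> else if y = bit (\<not> x) then \<delta> else 0)"

definition BSC_out :: "int set" where "BSC_out = {0, 1}"

definition BEC :: "real \<Rightarrow> bool \<Rightarrow> int \<Rightarrow> real" where
  "BEC \<epsilon> x y = (if y = bit x then 1 - \<epsilon> else if y = 2 then \<epsilon> else 0)"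

definition BEC_out :: "int set" where "BEC_out = {0, 1, 2}"

end

theory Submission
  imports Defs
begin


lemma mono_by_deriv:
  fixes f f' :: "real \<Rightarrow> real"
  assumes "a \<le> b" "continuous_on {a..b} f"
    "\<And>x. a < x \<Longrightarrow> x < b \<Longrightarrow> (f has_real_derivative f' x) (at x)"
    "\<And>x. a < x \<Longrightarrow> x < b \<Longrightarrow> f' x \<ge> 0"
  shows "f a \<le> f b"
  using DERIV_nonneg_imp_increasing_open[of a b f] assms by blast

lemma V_sign:
  fixes n r :: real assumes "r \<ge> 1"
  shows "n*(n-2)*(2*r powr n - n*r^2 + n - 2) \<ge> 0"
proof -
  let ?f = "\<lambda>r. n*(n-2)*(2*r powr n - n*r^2 + n - 2)"
  have "?f 1 \<le> ?f r"
  proof (rule mono_by_deriv[where a=1 and b=r and f="?f" and f' = "\<lambda>r. n*(n-2)*(2*(n* r powr (n-1)) - n*(2*r))"])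
    show "continuous_on {1..r} ?f" by (intro continuous_intros) auto
  next
    fix x assume x: "1 < x" "x < r"
    show "(?f has_real_derivative n*(n-2)*(2*(n* x powr (n-1)) - n*(2*x))) (at x)"
      using x by (auto intro!: derivative_eq_intros)
  next
    fix x :: real assume x: "1 < x" "x < r"
    have e: "x powr (n-1) = x * x powr (n-2)"
    proof -
      have "x powr (n-1) = x powr (1 + (n-2))" by simp
      also have "\<dots> = x powr 1 * x powr (n-2)" by (rule powr_add)
      finally show ?thesis using x by simp
    qed
    have "(n-2)*(x powr (n-2) - 1) \<ge> 0"
    proof (cases "n \<ge> 2")
      case True
      then have "x powr (n-2) \<ge> 1" using x by (simp add: ge_one_powr_ge_zero)
      then show ?thesis using True by simp
    next
      case False
      then have "x powr (n-2) \<le> x powr 0" using x by (intro powr_mono) auto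
      then show ?thesis using False x by (simp add: mult_nonpos_nonpos)
    qed
    then have "n*n*(2*x)*((n-2)*(x powr (n-2) - 1)) \<ge> 0" using x by simp
    then show "n*(n-2)*(2*(n* x powr (n-1)) - n*(2*x)) \<ge> 0"
      by (simp add: e algebra_simps)
  qed (use assms in auto)
  then show ?thesis by simp
qed

definition TT :: "real \<Rightarrow> real \<Rightarrow> real" where
  "TT n r = r powr (2*n-2) + (1-n) * r powr n + (n-1) * r powr (n-2) - 1"

lemma T_sign:
  fixes n r :: real assumes "r \<ge> 1"
  shows "n*(n-1)*(n-2)*TT n r \<ge> 0"
proof -
  let ?f = "\<lambda>r. n*(n-1)*(n-2)*TT n r"
  let ?g = "\<lambda>r. n*(n-1)*(n-2)*((2*n-2) * r powr (2*n-2-1) + (1-n) * (n * r powr (n-1)) + (n-1)*((n-2) * r powr (n-2-1)))"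
  have "?f 1 \<le> ?f r"
  proof (rule mono_by_deriv[where a=1 and b=r and f="?f" and f' = ?g])
    show "continuous_on {1..r} ?f" unfolding TT_def by (intro continuous_intros) auto
  next
    fix x assume x: "1 < x" "x < r"
    show "(?f has_real_derivative ?g x) (at x)"
      unfolding TT_def using x by (auto intro!: derivative_eq_intros)
  next
    fix x :: real assume x: "1 < x" "x < r"
    have V: "n*(n-2)*(2*x powr n - n*x^2 + n - 2) \<ge> 0" using V_sign x by auto
    have p: "x powr (n-3) > 0" using x by simp
    have "(n-1)^2 * x powr (n-3) * (n*(n-2)*(2*x powr n - n*x^2 + n - 2)) \<ge> 0"
      using V p by simp
    moreover have eqg: "?g x = (n-1)^2 * x powr (n-3) * (n*(n-2)*(2*x powr n - n*x^2 + n - 2))"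
    proof -
      have a: "2*n-2-1 = 2*n-3" "n-2-1 = n-3" by simp_all
      have *: "\<And>a b. x powr (a + b) = x powr a * x powr b" by (rule powr_add)
      have b1: "x powr (n-1) = x powr (n-3) * x^2"
      proof -
        have "x powr (n-1) = x powr ((n-3) + 2)" by simp
        then show ?thesis using x by (simp only: * powr_numeral)
      qed
      have b2: "x powr n = x powr (n-3) * x^3"
      proof -
        have "x powr n = x powr ((n-3) + 3)" by simp
        then show ?thesis using x by (simp only: * powr_numeral)
      qed
      have b3: "x powr (2*n-3) = x powr (n-3) * x powr n"
      proof -
        have "x powr (2*n-3) = x powr ((n-3) + n)" by (simp add: algebra_simps)
        then show ?thesis by (simp only: *)
      qed
      note b = b1 b2 b3
      show ?thesis unfolding a b by (simp add: algebra_simps power2_eq_square power3_eq_cube)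
    qed
    ultimately show "?g x \<ge> 0" by (metis (no_types, lifting))
  qed (use assms in auto)
  then show ?thesis by (simp add: TT_def)
qed

lemma powr_facts:
  fixes x n :: real assumes x: "x > 0"
  shows "x powr n = x^2 * x powr (n-2)" "x powr (n-1) = x * x powr (n-2)"
    "x powr (2*n-2) = x^2 * (x powr (n-2))^2"
proof -
  have *: "\<And>a b. x powr (a + b) = x powr a * x powr b" by (rule powr_add)
  have "x powr n = x powr (2 + (n-2))" by simp
  also have "\<dots> = x^2 * x powr (n-2)" using x by (simp only: * powr_numeral)
  finally show "x powr n = x^2 * x powr (n-2)" .
  have "x powr (n-1) = x powr (1 + (n-2))" by simp
  also have "\<dots> = x * x powr (n-2)" using x by (simp only: * powr_one)
  finally show "x powr (n-1) = x * x powr (n-2)" .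
  have "x powr (2*n-2) = x powr (2 + ((n-2) + (n-2)))" by (simp add: algebra_simps)
  also have "\<dots> = x^2 * (x powr (n-2))^2" using x by (simp only: * powr_numeral power2_eq_square)
  finally show "x powr (2*n-2) = x^2 * (x powr (n-2))^2" .
qed

definition QQ :: "real \<Rightarrow> real \<Rightarrow> real" where
  "QQ n r = (r - r powr (n-1)) / (r powr n - 1)"

lemma powr_ne_one: "n \<noteq> 0 \<Longrightarrow> (x::real) > 1 \<Longrightarrow> x powr n \<noteq> 1"
  using powr_inj[of x n 0] by simp

lemma Q_mono:
  fixes n r1 r2 :: real assumes "n \<noteq> 0" "1 < r1" "r1 \<le> r2"
  shows "n*(n-1)*(n-2)*(QQ n r2 - QQ n r1) \<ge> 0"
proof -
  let ?f = "\<lambda>r. n*(n-1)*(n-2)*QQ n r"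
  let ?g = "\<lambda>x. n*(n-1)*(n-2)*(((1 - (n-1)*x powr (n-1-1))*(x powr n - 1) - (x - x powr (n-1))*(n*x powr (n-1)))/(x powr n - 1)^2)"
  have "?f r1 \<le> ?f r2"
  proof (rule mono_by_deriv[where a=r1 and b=r2 and f="?f" and f' = ?g])
    show "continuous_on {r1..r2} ?f" unfolding QQ_def using assms
      by (intro continuous_intros) (auto dest: powr_ne_one)
  next
    fix x assume x: "r1 < x" "x < r2"
    have "x powr n - 1 \<noteq> 0" using powr_ne_one[of n x] assms x by auto
    then show "(?f has_real_derivative ?g x) (at x)"
      unfolding QQ_def using x assms
      by (auto intro!: derivative_eq_intros simp: power2_eq_square) (simp add: algebra_simps)
  next
    fix x :: real assume x: "r1 < x" "x < r2"
    have x1: "x > 1" using x assms by auto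
    have T: "n*(n-1)*(n-2)*TT n x \<ge> 0" using T_sign x1 by auto
    have ne: "x powr n - 1 \<noteq> 0" using powr_ne_one[of n x] assms x1 by auto
    have num: "((1 - (n-1)*x powr (n-1-1))*(x powr n - 1) - (x - x powr (n-1))*(n*x powr (n-1))) = TT n x"
    proof -
      have x0: "x > 0" using x1 by simp
      have e: "n - 1 - 1 = n - 2" by simp
      define a where "a = x powr (n-2)"
      have f: "x powr n = x^2*a" "x powr (n-1) = x*a" "x powr (2*n-2) = x^2*a^2"
        unfolding a_def by (rule powr_facts[OF x0])+
      have pid: "(1 - (n-1)*a)*(x^2*a - 1) - (x - x*a)*(n*(x*a)) = x^2*a^2 + (1-n)*(x^2*a) + (n-1)*a - 1"
        by (simp add: algebra_simps power2_eq_square)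
      show ?thesis unfolding TT_def e f a_def[symmetric] by (rule pid)
    qed
    have "?g x = n*(n-1)*(n-2)*(TT n x / (x powr n - 1)^2)"
      by (simp only: num)
    also have "\<dots> = (n*(n-1)*(n-2)*TT n x) / (x powr n - 1)^2"
      by (rule times_divide_eq_right)
    also have "\<dots> \<ge> 0" using T by (intro divide_nonneg_nonneg) auto
    finally show "?g x \<ge> 0" .
  qed (use assms in auto)
  then show ?thesis by (simp add: algebra_simps)
qed



definition DD :: "real \<Rightarrow> real \<Rightarrow> real" where
  "DD n x = (1+x) powr n - (1-x) powr n"
definition AA :: "real \<Rightarrow> real \<Rightarrow> real" where
  "AA n x = (1+x) powr (n-1) + (1-x) powr (n-1)"
definition eta :: "real \<Rightarrow> real \<Rightarrow> real" where
  "eta n x = n * x * AA n x / DD n x"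

lemma eta_Q:
  fixes n x :: real assumes "n \<noteq> 0" "0 < x" "x < 1"
  shows "eta n x = n/2 * (1 + QQ n ((1+x)/(1-x)))"
proof -
  define b where "b = 1 - x"
  define r where "r = (1+x)/(1-x)"
  have b: "b > 0" using assms b_def by simp
  have r1: "r > 1" using assms unfolding r_def by (simp add: field_simps)
  have br: "1 + x = b * r" using b unfolding r_def b_def by simp
  have rn: "r powr n \<noteq> 1" using powr_ne_one[OF assms(1) r1] .
  have p1: "(1+x) powr n = b powr n * r powr n" unfolding br using b r1 by (simp add: powr_mult)
  have p2: "(1+x) powr (n-1) = b powr n / b * (r powr n / r)"
    unfolding br using b r1 by (simp add: powr_mult powr_diff)
  have p3: "(1-x) powr (n-1) = b powr n / b" using b unfolding b_def by (simp add: powr_diff)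
  have p4: "r powr (n-1) = r powr n / r" using r1 by (simp add: powr_diff)
  have xb: "x = b * (r - 1) / 2" using b unfolding r_def b_def by (simp add: field_simps)
  have bn: "b powr n > 0" using b by simp
  have "eta n x = n * x * (b powr n / b * (r powr n / r + 1)) / (b powr n * (r powr n - 1))"
    unfolding eta_def AA_def DD_def p1 p2 p3 b_def[symmetric] using b by (simp add: algebra_simps powr_diff)
  also have "\<dots> = n/2 * (1 + QQ n r)"
    unfolding QQ_def p4 xb using b r1 rn bn by (simp add: field_simps)
  finally show ?thesis unfolding r_def .
qed

lemma eta_mono:
  fixes n x1 x2 \<zeta> :: real
  assumes "n \<noteq> 0" "0 < x1" "x1 \<le> x2" "x2 < 1" "\<zeta> = 1 \<or> \<zeta> = -1" "\<zeta>*(n-1)*(n-2) \<le> 0"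
  shows "\<zeta>*(eta n x1 - eta n x2) \<ge> 0"
proof -
  define r1 where "r1 = (1+x1)/(1-x1)"
  define r2 where "r2 = (1+x2)/(1-x2)"
  have r1: "1 < r1" using assms unfolding r1_def by (simp add: field_simps)
  have r12: "r1 \<le> r2" using assms unfolding r1_def r2_def by (simp add: field_simps)
  have e: "eta n x1 - eta n x2 = n/2 * (QQ n r1 - QQ n r2)"
    using eta_Q[of n x1] eta_Q[of n x2] assms unfolding r1_def r2_def by (simp add: algebra_simps)
  have Q: "((n-1)*(n-2))*(n*(QQ n r2 - QQ n r1)) \<ge> 0"
    using Q_mono[OF assms(1) r1 r12] by (simp add: algebra_simps)
  consider "n = 1" | "n = 2" | "(n-1)*(n-2) \<noteq> 0" by fastforce
  then show ?thesis
  proof cases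
    case 1
    have "QQ n r = 1" if "r > 1" for r using that unfolding 1 QQ_def by simp
    then show ?thesis using e r1 r12 by simp
  next
    case 2
    have "QQ n r = 0" if "r > 1" for r using that unfolding 2 QQ_def by simp
    then show ?thesis using e r1 r12 by simp
  next
    case 3
    have "\<zeta>*((n-1)*(n-2)) \<noteq> 0" using 3 assms(5) by auto
    moreover have "\<zeta>*((n-1)*(n-2)) \<le> 0" using assms(6) by (simp add: mult.assoc)
    ultimately have c: "\<zeta>*((n-1)*(n-2)) < 0" by linarith
    show ?thesis
    proof (cases "\<zeta> = 1")
      case True
      then have "(n-1)*(n-2) < 0" using c by simp
      then have "n*(QQ n r2 - QQ n r1) \<le> 0" using Q
        by (smt (verit) mult_neg_pos)
      then show ?thesis using True e by (simp add: algebra_simps)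
    next
      case False
      then have z: "\<zeta> = -1" using assms(5) by simp
      then have "(n-1)*(n-2) > 0" using c by simp
      then have "n*(QQ n r2 - QQ n r1) \<ge> 0" using Q
        by (smt (verit) mult_pos_neg)
      then show ?thesis using z e by (simp add: algebra_simps)
    qed
  qed
qed

lemma mono_by_deriv_nonpos:
  fixes f f' :: "real \<Rightarrow> real"
  assumes "a \<le> b" "continuous_on {a..b} f"
    "\<And>x. a < x \<Longrightarrow> x < b \<Longrightarrow> (f has_real_derivative f' x) (at x)"
    "\<And>x. a < x \<Longrightarrow> x < b \<Longrightarrow> f' x \<le> 0"
  shows "f b \<le> f a"
  using DERIV_nonpos_imp_decreasing_open[of a b f] assms by blast

lemma DD_sign:
  fixes n x :: real assumes "n \<noteq> 0" "0 < x" "x < 1"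
  shows "n * DD n x > 0"
proof (cases "n > 0")
  case True
  have "(1-x) powr n < (1+x) powr n" using assms True by (intro powr_less_mono2) auto
  then show ?thesis using True unfolding DD_def by simp
next
  case False
  then have n: "n < 0" using assms by simp
  have "(1+x) powr n < (1-x) powr n" using assms n by (intro powr_less_mono2_neg) auto
  then show ?thesis using n unfolding DD_def by (simp add: mult_neg_neg)
qed

lemma DD_ne: "n \<noteq> 0 \<Longrightarrow> 0 < x \<Longrightarrow> x < 1 \<Longrightarrow> DD n x \<noteq> 0"
  using DD_sign[of n x] by auto

lemma DD_deriv:
  fixes n x :: real assumes "-1 < x" "x < 1"
  shows "(DD n has_real_derivative n * AA n x) (at x)"
  unfolding DD_def AA_def using assms
  by (auto intro!: derivative_eq_intros simp: algebra_simps)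

lemma kt_le: "0 \<le> (k::real) \<Longrightarrow> k \<le> 1 \<Longrightarrow> 0 \<le> t \<Longrightarrow> k*t \<le> t"
  using mult_left_le_one_le by blast
lemma kt_less: "0 \<le> (k::real) \<Longrightarrow> k \<le> 1 \<Longrightarrow> 0 \<le> t \<Longrightarrow> t < 1 \<Longrightarrow> k*t < 1"
  using kt_le[of k t] by linarith

definition RR :: "real \<Rightarrow> real \<Rightarrow> real \<Rightarrow> real" where
  "RR n k t = k * DD n (k*t) / DD n t"

lemma R_mono:
  fixes n k t1 t2 \<zeta> :: real
  assumes "n \<noteq> 0" "0 \<le> k" "k \<le> 1" "0 < t1" "t1 \<le> t2" "t2 < 1"
    "\<zeta> = 1 \<or> \<zeta> = -1" "\<zeta>*(n-1)*(n-2) \<le> 0"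
  shows "\<zeta>*(RR n k t2 - RR n k t1) \<ge> 0"
proof -
  consider "k = 0" | "k = 1" | "0 < k" "k < 1" using assms by linarith
  then show ?thesis
  proof cases
    case 1 then show ?thesis unfolding RR_def by simp
  next
    case 2
    have "DD n t1 \<noteq> 0" "DD n t2 \<noteq> 0" using DD_ne assms by auto
    then show ?thesis unfolding RR_def 2 by simp
  next
    case 3
    let ?f = "\<lambda>t. \<zeta> * (DD n (k*t) / DD n t)"
    let ?g = "\<lambda>t. \<zeta> * ((k * (n * AA n (k*t)) * DD n t - DD n (k*t) * (n * AA n t)) / (DD n t * DD n t))"
    have "?f t1 \<le> ?f t2"
    proof (rule mono_by_deriv[where a=t1 and b=t2 and f="?f" and f'="?g"])
      show "t1 \<le> t2" by fact
      have "\<forall>t\<in>{t1..t2}. DD n t \<noteq> 0" using DD_ne assms by force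
      moreover have "\<forall>t\<in>{t1..t2}. 1 + k*t \<noteq> 0"
      proof
        fix t assume "t \<in> {t1..t2}"
        then have "t > 0" using assms by auto
        then have "k*t \<ge> 0" using 3 by simp
        then show "1 + k*t \<noteq> 0" by linarith
      qed
      moreover have "\<forall>t\<in>{t1..t2}. k*t < 1" using assms 3
        using kt_less[of k] by (auto simp: kt_less kt_le)
      ultimately show "continuous_on {t1..t2} ?f" unfolding DD_def using assms 3
        by (intro continuous_intros) auto
    next
      fix t assume t: "t1 < t" "t < t2"
      have kt0: "0 < k*t" "k*t < 1" using t assms 3 kt_less[of k t] by auto
      have dk: "(DD n has_real_derivative n * AA n (k*t)) (at (k*t))"
        using DD_deriv[of "k*t" n] kt0 by auto
      have dl: "((\<lambda>t. k*t) has_real_derivative k) (at t)" by (auto intro!: derivative_eq_intros)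
      have d1: "((\<lambda>t. DD n (k*t)) has_real_derivative (n * AA n (k*t)) * k) (at t)"
        using DERIV_chain2[OF dk dl] .
      have d2: "(DD n has_real_derivative n * AA n t) (at t)" using DD_deriv t assms by auto
      have ne: "DD n t \<noteq> 0" using DD_ne t assms by auto
      show "(?f has_real_derivative ?g t) (at t)"
        using DERIV_cmult[OF DERIV_divide[OF d1 d2 ne], of \<zeta>] by (simp add: algebra_simps)
    next
      fix t assume t: "t1 < t" "t < t2"
      have t0: "0 < t" "t < 1" using t assms by auto
      have kt: "0 < k*t" "k*t \<le> t" "k*t < 1" using t0 3 by (auto simp: kt_less kt_le mult_le_one)
      have ne: "DD n t \<noteq> 0" "DD n (k*t) \<noteq> 0" using DD_ne t0 kt assms by auto
      have ea: "n * AA n x = eta n x * DD n x / x" if "DD n x \<noteq> 0" "x > 0" for x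
        using that unfolding eta_def by (simp add: field_simps)
      have num: "k * (n * AA n (k*t)) * DD n t - DD n (k*t) * (n * AA n t)
          = DD n (k*t) * DD n t / t * (eta n (k*t) - eta n t)"
        unfolding ea[OF ne(2) kt(1)] ea[OF ne(1) t0(1)] using 3 t0 by (simp add: field_simps)
      have pos: "DD n (k*t) * DD n t > 0"
      proof -
        have a: "n * DD n (k*t) > 0" "n * DD n t > 0" using DD_sign assms t0 kt by auto
        show ?thesis
        proof (cases "n > 0")
          case True then show ?thesis using a by (simp add: zero_less_mult_iff)
        next
          case False then have "n < 0" using assms by simp
          then show ?thesis using a by (simp add: zero_less_mult_iff)
        qed
      qed
      have em: "\<zeta>*(eta n (k*t) - eta n t) \<ge> 0" using eta_mono[OF assms(1) kt(1) kt(2) t0(2) assms(7,8)] .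
      have "?g t = (DD n (k*t) * DD n t / t) * (\<zeta>*(eta n (k*t) - eta n t)) / (DD n t * DD n t)"
        unfolding num by simp
      also have "\<dots> \<ge> 0"
      proof -
        have A: "DD n (k*t) * DD n t / t \<ge> 0" using pos t0 by simp
        show ?thesis by (rule divide_nonneg_nonneg[OF mult_nonneg_nonneg[OF A em]]) simp
      qed
      finally show "?g t \<ge> 0" .
    qed
    then have h: "\<zeta>*(DD n (k*t2)/DD n t2 - DD n (k*t1)/DD n t1) \<ge> 0"
      by (simp add: algebra_simps)
    have "\<zeta>*(RR n k t2 - RR n k t1) = k * (\<zeta>*(DD n (k*t2)/DD n t2 - DD n (k*t1)/DD n t1))"
      unfolding RR_def by (simp add: algebra_simps)
    also have "\<dots> \<ge> 0" using h 3 by simp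
    finally show ?thesis .
  qed
qed



definition EE :: "real \<Rightarrow> real \<Rightarrow> real" where
  "EE m x = (1+x) powr m + (1-x) powr m"

lemma EE_deriv_k:
  fixes m k t :: real assumes "-1 < k*t" "k*t < 1"
  shows "((\<lambda>t. EE m (k*t)) has_real_derivative m * DD (m-1) (k*t) * k) (at t)"
proof -
  have d: "(EE m has_real_derivative m * DD (m-1) (k*t)) (at (k*t))"
    unfolding EE_def DD_def using assms
    by (auto intro!: derivative_eq_intros simp: algebra_simps)
  have dl: "((\<lambda>t. k*t) has_real_derivative k) (at t)" by (auto intro!: derivative_eq_intros)
  show ?thesis using DERIV_chain2[OF d dl] .
qed

lemma EE_deriv:
  fixes m t :: real assumes "-1 < t" "t < 1"
  shows "(EE m has_real_derivative m * DD (m-1) t) (at t)"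
  using EE_deriv_k[of 1 t m] assms by simp

lemma EE_cont:
  fixes m k :: real assumes "m > 0" "0 \<le> k" "k \<le> 1"
  shows "continuous_on {0..1} (\<lambda>t. EE m (k*t))"
proof -
  have "\<forall>t\<in>{0..1}. 0 \<le> 1 + k*t \<and> 0 \<le> 1 - k*t"
    using assms kt_le[of k] by (auto simp: mult_nonneg_nonneg) (smt (verit))
  then show ?thesis unfolding EE_def using assms
    by (intro continuous_intros continuous_on_powr') auto
qed

lemma EE_cont1:
  fixes m :: real assumes "m > 0"
  shows "continuous_on {0..1} (EE m)"
  using EE_cont[of m 1] assms by simp

lemma EE_0: "EE m 0 = 2" unfolding EE_def by simp
lemma EE_1: "m > 0 \<Longrightarrow> EE m 1 = 2 powr m" unfolding EE_def by simp
lemma EE_1_ne: "m > 0 \<Longrightarrow> m \<noteq> 1 \<Longrightarrow> EE m 1 \<noteq> 2"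
  using EE_1[of m] powr_inj[of 2 m 1] by auto
lemma EE_even: "EE m (-x) = EE m x" unfolding EE_def by simp
lemma EE_pos: "0 \<le> x \<Longrightarrow> x \<le> 1 \<Longrightarrow> EE m x > 0"
  unfolding EE_def by (simp add: add_pos_nonneg)

lemma EE_mono_strict:
  fixes m a b :: real assumes "m > 0" "m \<noteq> 1" "0 \<le> a" "a < b" "b \<le> 1"
  shows "(m-1) * EE m a < (m-1) * EE m b"
proof (rule DERIV_pos_imp_increasing_open[OF assms(4)])
  fix x assume x: "a < x" "x < b"
  have "(m-1) * DD (m-1) x > 0" using DD_sign[of "m-1" x] assms x by auto
  then have "(m-1) * (m * DD (m-1) x) > 0" using assms
    by (metis mult.left_commute mult_pos_pos)
  moreover have "((\<lambda>x. (m-1) * EE m x) has_real_derivative (m-1) * (m * DD (m-1) x)) (at x)"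
    using DERIV_cmult[OF EE_deriv[of x m], of "m-1"] x assms by auto
  ultimately show "\<exists>y. ((\<lambda>x. (m-1) * EE m x) has_real_derivative y) (at x) \<and> 0 < y" by blast
next
  have "continuous_on {a..b} (EE m)" using EE_cont1[OF assms(1)]
    by (rule continuous_on_subset) (use assms in auto)
  then show "continuous_on {a..b} (\<lambda>x. (m-1) * EE m x)" by (intro continuous_intros)
qed

lemma EE_mono:
  fixes m a b :: real assumes "m > 0" "m \<noteq> 1" "0 \<le> a" "a \<le> b" "b \<le> 1"
  shows "(m-1) * EE m a \<le> (m-1) * EE m b"
  using EE_mono_strict[of m a b] assms by (cases "a = b") auto

lemma Phi_deriv_sign:
  fixes m k t c \<theta> \<zeta> :: real
  assumes "m > 0" "m \<noteq> 1" "\<zeta> = 1 \<or> \<zeta> = -1" "\<theta>*\<zeta>*(m-1) > 0" "0 < t" "t < 1"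
  shows "\<theta>*(m * DD (m-1) (k*t) * k - c*(m * DD (m-1) t)) = m * (\<theta>*\<zeta>*DD (m-1) t) * (\<zeta>*(RR (m-1) k t - c))"
    and "\<theta>*\<zeta>*DD (m-1) t > 0"
proof -
  have ne: "DD (m-1) t \<noteq> 0" using DD_ne[of "m-1" t] assms by auto
  have z: "\<zeta>*\<zeta> = 1" using assms(3) by auto
  show "\<theta>*(m * DD (m-1) (k*t) * k - c*(m * DD (m-1) t)) = m * (\<theta>*\<zeta>*DD (m-1) t) * (\<zeta>*(RR (m-1) k t - c))"
    using assms(3) ne by (elim disjE) (simp_all add: RR_def field_simps)
  have a: "(m-1) * DD (m-1) t > 0" using DD_sign[of "m-1" t] assms by auto
  have "(\<theta>*\<zeta>*(m-1)) * ((m-1) * DD (m-1) t) > 0" using a assms(4) by simp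
  then have "((m-1)*(m-1)) * (\<theta>*\<zeta>*DD (m-1) t) > 0" by (simp add: algebra_simps)
  then show "\<theta>*\<zeta>*DD (m-1) t > 0" by (simp add: zero_less_mult_iff)
qed




lemma Phi_cont:
  fixes m k c \<theta> :: real assumes "m > 0" "0 \<le> k" "k \<le> 1" "0 \<le> a" "b \<le> 1"
  shows "continuous_on {a..b} (\<lambda>t. \<theta>*(EE m (k*t) - c*EE m t))"
proof -
  have "continuous_on {0..1} (\<lambda>t. \<theta>*(EE m (k*t) - c*EE m t))"
    using EE_cont[OF assms(1-3)] EE_cont1[OF assms(1)] by (intro continuous_intros)
  then show ?thesis by (rule continuous_on_subset) (use assms in auto)
qed

lemma Phi_deriv:
  fixes m k c \<theta> t :: real assumes "0 \<le> k" "k \<le> 1" "0 < t" "t < 1"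
  shows "((\<lambda>t. \<theta>*(EE m (k*t) - c*EE m t)) has_real_derivative
           \<theta>*(m * DD (m-1) (k*t) * k - c*(m * DD (m-1) t))) (at t)"
proof -
  have kt: "-1 < k*t" "k*t < 1" using assms kt_less[of k t] by (auto intro: order.strict_trans2[of _ 0])
  show ?thesis
    using DERIV_cmult[OF DERIV_diff[OF EE_deriv_k[OF kt, of m] DERIV_cmult[OF EE_deriv[of t m], of c]], of \<theta>]
      assms by simp
qed

lemma E_tangent:
  fixes m k \<tau>0 \<tau> \<theta> \<zeta> :: real
  assumes m: "m > 0" "m \<noteq> 1" and z: "\<zeta> = 1 \<or> \<zeta> = -1" "\<zeta>*(m-2)*(m-3) \<le> 0"
    and th: "\<theta>*\<zeta>*(m-1) > 0" and k: "0 \<le> k" "k \<le> 1"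
    and t0: "0 < \<tau>0" "\<tau>0 < 1" and t: "0 \<le> \<tau>" "\<tau> \<le> 1"
  shows "\<theta>*(EE m (k*\<tau>) - EE m (k*\<tau>0) - RR (m-1) k \<tau>0 * (EE m \<tau> - EE m \<tau>0)) \<ge> 0"
proof -
  define c where "c = RR (m-1) k \<tau>0"
  let ?F = "\<lambda>t. \<theta>*(EE m (k*t) - c*EE m t)"
  let ?F' = "\<lambda>t. \<theta>*(m * DD (m-1) (k*t) * k - c*(m * DD (m-1) t))"
  have n0: "m - 1 \<noteq> 0" using m by simp
  have zz: "\<zeta>*(m-1-1)*(m-1-2) \<le> 0" using z by (simp add: algebra_simps)
  have der: "(?F has_real_derivative ?F' x) (at x)" if "0 < x" "x < 1" for x
    using Phi_deriv[OF k that] .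
  have sgn: "?F' x = m * (\<theta>*\<zeta>*DD (m-1) x) * (\<zeta>*(RR (m-1) k x - c))"
    "\<theta>*\<zeta>*DD (m-1) x > 0" if "0 < x" "x < 1" for x
    using Phi_deriv_sign[OF m z(1) th that] by auto
  have "?F \<tau>0 \<le> ?F \<tau>"
  proof (cases "\<tau>0 \<le> \<tau>")
    case True
    show ?thesis
    proof (rule mono_by_deriv[where a=\<tau>0 and b=\<tau> and f="?F" and f'="?F'"])
      show "continuous_on {\<tau>0..\<tau>} ?F" using Phi_cont[OF m(1) k] t0 t by auto
    next
      fix x assume x: "\<tau>0 < x" "x < \<tau>"
      then have x01: "0 < x" "x < 1" using t0 t by auto
      show "(?F has_real_derivative ?F' x) (at x)" using der[OF x01] .
      have "\<zeta>*(RR (m-1) k x - c) \<ge> 0" unfolding c_def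
        using R_mono[OF n0 k t0(1) _ x01(2) z(1) zz] x by auto
      then show "?F' x \<ge> 0" unfolding sgn(1)[OF x01] using sgn(2)[OF x01] m by simp
    qed (use True in auto)
  next
    case False
    show ?thesis
    proof (rule mono_by_deriv_nonpos[where a=\<tau> and b=\<tau>0 and f="?F" and f'="?F'"])
      show "continuous_on {\<tau>..\<tau>0} ?F" using Phi_cont[OF m(1) k] t0 t by auto
    next
      fix x assume x: "\<tau> < x" "x < \<tau>0"
      then have x01: "0 < x" "x < 1" using t0 t by auto
      show "(?F has_real_derivative ?F' x) (at x)" using der[OF x01] .
      have "\<zeta>*(RR (m-1) k \<tau>0 - RR (m-1) k x) \<ge> 0"
        using R_mono[OF n0 k x01(1) _ t0(2) z(1) zz] x by auto
      then have "\<zeta>*(RR (m-1) k x - c) \<le> 0" unfolding c_def by (simp add: algebra_simps)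
      then show "?F' x \<le> 0" unfolding sgn(1)[OF x01] using sgn(2)[OF x01] m
        by (simp add: mult_nonneg_nonpos)
    qed (use False in auto)
  qed
  then show ?thesis unfolding c_def by (simp add: algebra_simps)
qed

lemma E_chord:
  fixes m k \<tau> \<theta> \<zeta> :: real
  assumes m: "m > 0" "m \<noteq> 1" and z: "\<zeta> = 1 \<or> \<zeta> = -1" "\<zeta>*(m-2)*(m-3) \<le> 0"
    and th: "\<theta>*\<zeta>*(m-1) > 0" and k: "0 \<le> k" "k \<le> 1"
    and t: "0 \<le> \<tau>" "\<tau> \<le> 1"
  shows "\<theta>*(EE m (k*\<tau>) - 2 - (EE m k - 2)/(EE m 1 - 2) * (EE m \<tau> - 2)) \<le> 0"
proof -
  define c where "c = (EE m k - 2)/(EE m 1 - 2)"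
  let ?F = "\<lambda>t. \<theta>*(EE m (k*t) - c*EE m t)"
  let ?F' = "\<lambda>t. \<theta>*(m * DD (m-1) (k*t) * k - c*(m * DD (m-1) t))"
  have n0: "m - 1 \<noteq> 0" using m by simp
  have zz: "\<zeta>*(m-1-1)*(m-1-2) \<le> 0" using z by (simp add: algebra_simps)
  have der: "(?F has_real_derivative ?F' x) (at x)" if "0 < x" "x < 1" for x
    using Phi_deriv[OF k that] .
  have sgn: "?F' x = m * (\<theta>*\<zeta>*DD (m-1) x) * (\<zeta>*(RR (m-1) k x - c))"
    "\<theta>*\<zeta>*DD (m-1) x > 0" if "0 < x" "x < 1" for x
    using Phi_deriv_sign[OF m z(1) th that] by auto
  have e1: "EE m 1 - 2 \<noteq> 0" using EE_1_ne[OF m] by simp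
  have F01: "?F 1 = ?F 0" unfolding c_def using e1 by (simp add: field_simps EE_0)
  have "?F \<tau> \<le> ?F 0"
  proof -
    consider "\<tau> = 0" | "\<tau> = 1" | "0 < \<tau>" "\<tau> < 1" using t by linarith
    then show ?thesis
    proof cases
      case 1 then show ?thesis by simp
    next
      case 2 then show ?thesis using F01 by (metis order_refl)
    next
      case 3
      show ?thesis
      proof (cases "\<zeta>*(RR (m-1) k \<tau> - c) \<le> 0")
        case True
        show ?thesis
        proof (rule mono_by_deriv_nonpos[where a=0 and b=\<tau> and f="?F" and f'="?F'"])
          show "continuous_on {0..\<tau>} ?F" using Phi_cont[OF m(1) k] 3 by auto
        next
          fix x assume x: "0 < x" "x < \<tau>"
          then have x01: "0 < x" "x < 1" using 3 by auto
          show "(?F has_real_derivative ?F' x) (at x)" using der[OF x01] .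
          have "\<zeta>*(RR (m-1) k \<tau> - RR (m-1) k x) \<ge> 0"
            using R_mono[OF n0 k x01(1) _ 3(2) z(1) zz] x by auto
          then have "\<zeta>*(RR (m-1) k x - c) \<le> 0" using True by (simp add: algebra_simps)
          then show "?F' x \<le> 0" unfolding sgn(1)[OF x01] using sgn(2)[OF x01] m
            by (simp add: mult_nonneg_nonpos)
        qed (use 3 in auto)
      next
        case False
        have "?F \<tau> \<le> ?F 1"
        proof (rule mono_by_deriv[where a=\<tau> and b=1 and f="?F" and f'="?F'"])
          show "continuous_on {\<tau>..1} ?F" using Phi_cont[OF m(1) k] 3 by auto
        next
          fix x assume x: "\<tau> < x" "x < 1"
          then have x01: "0 < x" "x < 1" using 3 by auto
          show "(?F has_real_derivative ?F' x) (at x)" using der[OF x01] .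
          have "\<zeta>*(RR (m-1) k x - RR (m-1) k \<tau>) \<ge> 0"
            using R_mono[OF n0 k 3(1) _ x01(2) z(1) zz] x by auto
          then have "\<zeta>*(RR (m-1) k x - c) \<ge> 0" using False by (simp add: algebra_simps)
          then show "?F' x \<ge> 0" unfolding sgn(1)[OF x01] using sgn(2)[OF x01] m by simp
        qed (use 3 in auto)
        then show ?thesis using F01 by linarith
      qed
    qed
  qed
  moreover have "?F 0 = \<theta>*(2 - c*2)" by (simp add: EE_0)
  moreover have "\<theta>*(EE m (k*\<tau>) - 2 - c*(EE m \<tau> - 2)) = ?F \<tau> - \<theta>*(2 - c*2)"
    by (simp add: algebra_simps)
  ultimately have "\<theta>*(EE m (k*\<tau>) - 2 - c*(EE m \<tau> - 2)) \<le> 0" by linarith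
  then show ?thesis unfolding c_def .
qed




definition GG :: "real \<Rightarrow> 'a set \<Rightarrow> ('a \<Rightarrow> real) \<Rightarrow> ('a \<Rightarrow> real) \<Rightarrow> real \<Rightarrow> real" where
  "GG m I w a k = (\<Sum>i\<in>I. w i * EE m (k * a i)) / 2"

definition profile :: "real \<Rightarrow> 'a set \<Rightarrow> ('a \<Rightarrow> real) \<Rightarrow> ('a \<Rightarrow> real) \<Rightarrow> bool" where
  "profile m I w a \<longleftrightarrow> finite I \<and> (\<forall>i\<in>I. w i \<ge> 0 \<and> 0 \<le> a i \<and> a i \<le> 1) \<and>
     (\<Sum>i\<in>I. w i * EE m (a i)) = 2"

lemma GG_0: "GG m I w a 0 = sum w I"
  unfolding GG_def by (simp add: EE_0 sum_distrib_right[symmetric])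

lemma prof_cap:
  assumes "profile m I w a" "m > 0" "m \<noteq> 1" "0 \<le> k" "k \<le> 1"
  shows "(m-1) * (GG m I w a k - GG m I w a 0) \<ge> 0"
proof -
  have fin: "finite I" using assms(1) unfolding profile_def by auto
  have e: "(\<Sum>i\<in>I. w i * ((m-1) * EE m (k * a i) - (m-1) * EE m 0)) = (m-1) * ((\<Sum>i\<in>I. w i * EE m (k * a i)) - (\<Sum>i\<in>I. w i * EE m 0))"
    using fin by (induct I rule: finite_induct) (simp_all add: algebra_simps)
  have "(m-1) * (GG m I w a k - GG m I w a 0) = (\<Sum>i\<in>I. w i * ((m-1) * EE m (k * a i) - (m-1) * EE m 0)) / 2"
    unfolding GG_def e by (simp add: algebra_simps diff_divide_distrib)
  also have "\<dots> \<ge> 0"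
  proof -
    have "w i * ((m-1) * EE m (k * a i) - (m-1) * EE m 0) \<ge> 0" if "i \<in> I" for i
    proof -
      have i: "w i \<ge> 0" "0 \<le> a i" "a i \<le> 1" using assms(1) that unfolding profile_def by auto
      have "0 \<le> k * a i" "k * a i \<le> 1" using i assms kt_le[of k "a i"] by auto
      then have "(m-1) * EE m 0 \<le> (m-1) * EE m (k * a i)" using EE_mono[OF assms(2,3)] by auto
      then show ?thesis using i by simp
    qed
    then show ?thesis by (simp add: sum_nonneg)
  qed
  finally show ?thesis .
qed

lemma prof_pos:
  assumes "profile m I w a" "0 \<le> k" "k \<le> 1"
  shows "GG m I w a k > 0"
proof -
  have fin: "finite I" and i: "\<And>i. i \<in> I \<Longrightarrow> w i \<ge> 0 \<and> 0 \<le> a i \<and> a i \<le> 1"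
    and s: "(\<Sum>i\<in>I. w i * EE m (a i)) = 2" using assms unfolding profile_def by auto
  obtain j where j: "j \<in> I" "w j \<noteq> 0"
  proof (rule ccontr)
    assume "\<not> thesis"
    then have "\<forall>j\<in>I. w j = 0" using that by blast
    then have "(\<Sum>i\<in>I. w i * EE m (a i)) = 0" by simp
    then show False using s by simp
  qed
  have nn: "\<And>i. i \<in> I \<Longrightarrow> 0 \<le> w i * EE m (k * a i)"
  proof -
    fix i assume "i \<in> I"
    then have "w i \<ge> 0" "0 \<le> k * a i" "k * a i \<le> 1" using i[of i] assms kt_le[of k "a i"] by auto
    then show "0 \<le> w i * EE m (k * a i)" using EE_pos[of "k * a i" m] by simp
  qed
  have "0 < w j * EE m (k * a j)"
  proof -
    have "w j > 0" "0 \<le> k * a j" "k * a j \<le> 1" using i[OF j(1)] j(2) assms kt_le[of k "a j"] by auto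
    then show ?thesis using EE_pos[of "k * a j" m] by simp
  qed
  also have "\<dots> \<le> (\<Sum>i\<in>I. w i * EE m (k * a i))"
    using member_le_sum[of j I "\<lambda>i. w i * EE m (k * a i)"] j(1) nn fin by auto
  finally show ?thesis unfolding GG_def by simp
qed

lemma prof_tangent:
  fixes \<theta> \<zeta> m k a0 w0 :: real
  assumes p: "profile m I w a" and m: "m > 0" "m \<noteq> 1"
    and z: "\<zeta> = 1 \<or> \<zeta> = -1" "\<zeta>*(m-2)*(m-3) \<le> 0" and th: "\<theta>*\<zeta>*(m-1) > 0"
    and k: "0 \<le> k" "k \<le> 1" and a0: "0 \<le> a0" "a0 \<le> 1"
    and S: "sum w I * EE m a0 = 2"
  shows "\<theta> * (GG m I w a k - sum w I * EE m (k * a0) / 2) \<ge> 0"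
proof -
  have fin: "finite I" and i: "\<And>i. i \<in> I \<Longrightarrow> w i \<ge> 0 \<and> 0 \<le> a i \<and> a i \<le> 1"
    and s: "(\<Sum>i\<in>I. w i * EE m (a i)) = 2" using p unfolding profile_def by auto
  have th1: "\<theta> = 1 \<or> \<theta> = -1 \<or> True" by simp
  consider "0 < a0 \<and> a0 < 1" | "a0 = 0" | "a0 = 1" using a0 by linarith
  then show ?thesis
  proof cases
    case 1
    define c where "c = RR (m-1) k a0"
    have t: "\<theta>*(w i * EE m (k * a i) - w i * EE m (k*a0) - c * (w i * EE m (a i) - w i * EE m a0)) \<ge> 0"
      if "i \<in> I" for i
    proof -
      have ii: "w i \<ge> 0" "0 \<le> a i" "a i \<le> 1" using i[OF that] by auto
      have "\<theta>*(EE m (k*a i) - EE m (k*a0) - c * (EE m (a i) - EE m a0)) \<ge> 0"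
        unfolding c_def using E_tangent[OF m z th k _ _ ii(2,3)] 1 by auto
      then have "w i * (\<theta>*(EE m (k*a i) - EE m (k*a0) - c * (EE m (a i) - EE m a0))) \<ge> 0"
        using ii by simp
      then show ?thesis by (simp add: algebra_simps)
    qed
    have "0 \<le> (\<Sum>i\<in>I. \<theta>*(w i * EE m (k * a i) - w i * EE m (k*a0) - c * (w i * EE m (a i) - w i * EE m a0)))"
      using t by (simp add: sum_nonneg)
    also have "\<dots> = \<theta> * ((\<Sum>i\<in>I. w i * EE m (k * a i)) - sum w I * EE m (k*a0) - c * ((\<Sum>i\<in>I. w i * EE m (a i)) - sum w I * EE m a0))"
      using fin by (induct I rule: finite_induct) (simp_all add: algebra_simps)
    also have "\<dots> = \<theta> * ((\<Sum>i\<in>I. w i * EE m (k * a i)) - sum w I * EE m (k*a0))"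
      using s S by simp
    finally show ?thesis unfolding GG_def by (simp add: algebra_simps)
  next
    case 2
    have nn: "\<And>i. i \<in> I \<Longrightarrow> 0 \<le> w i * ((m-1) * EE m (a i) - (m-1) * EE m a0)"
    proof -
      fix i assume "i \<in> I"
      then have ii: "w i \<ge> 0" "0 \<le> a i" "a i \<le> 1" using i by auto
      then have "(m-1) * EE m a0 \<le> (m-1) * EE m (a i)" using EE_mono[OF m, of a0 "a i"] 2 by auto
      then show "0 \<le> w i * ((m-1) * EE m (a i) - (m-1) * EE m a0)" using ii by simp
    qed
    have "(\<Sum>i\<in>I. w i * ((m-1) * EE m (a i) - (m-1) * EE m a0)) = (m-1) * ((\<Sum>i\<in>I. w i * EE m (a i)) - sum w I * EE m a0)"
      using fin by (induct I rule: finite_induct) (simp_all add: algebra_simps)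
    also have "\<dots> = 0" using s S by simp
    finally have "\<forall>i\<in>I. w i * ((m-1) * EE m (a i) - (m-1) * EE m a0) = 0"
      using iffD1[OF sum_nonneg_eq_0_iff[OF fin]] nn by (metis (no_types, lifting))
    then have eq: "\<forall>i\<in>I. w i * EE m (k * a i) = w i * EE m (k * a0)"
    proof (intro ballI)
      fix i assume "\<forall>i\<in>I. w i * ((m-1) * EE m (a i) - (m-1) * EE m a0) = 0" "i \<in> I"
      then have z0: "w i * ((m-1) * EE m (a i) - (m-1) * EE m a0) = 0" by auto
      have ii: "w i \<ge> 0" "0 \<le> a i" "a i \<le> 1" using i \<open>i \<in> I\<close> by auto
      show "w i * EE m (k * a i) = w i * EE m (k * a0)"
      proof (cases "w i = 0")
        case False
        then have "(m-1) * EE m (a i) = (m-1) * EE m a0" using z0 by simp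
        show ?thesis
        proof (cases "a i = a0")
          case False
          then have "a0 < a i" using 2 ii by linarith
          then have "(m-1) * EE m a0 < (m-1) * EE m (a i)" using EE_mono_strict[OF m, of a0 "a i"] 2 ii by blast
          then show ?thesis using \<open>(m-1) * EE m (a i) = (m-1) * EE m a0\<close> by linarith
        qed simp
      qed simp
    qed
    have "(\<Sum>i\<in>I. w i * EE m (k * a i)) = (\<Sum>i\<in>I. w i * EE m (k * a0))"
      by (rule sum.cong) (use eq in auto)
    then have "GG m I w a k = sum w I * EE m (k * a0) / 2"
      unfolding GG_def by (simp add: sum_distrib_right)
    then have "GG m I w a k - sum w I * EE m (k * a0) / 2 = 0" by linarith
    then show ?thesis by (metis mult_zero_right order_refl)
  next
    case 3
    have nn: "\<And>i. i \<in> I \<Longrightarrow> 0 \<le> w i * ((m-1) * EE m a0 - (m-1) * EE m (a i))"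
    proof -
      fix i assume "i \<in> I"
      then have ii: "w i \<ge> 0" "0 \<le> a i" "a i \<le> 1" using i by auto
      then have "(m-1) * EE m (a i) \<le> (m-1) * EE m a0" using EE_mono[OF m, of "a i" a0] 3 by auto
      then show "0 \<le> w i * ((m-1) * EE m a0 - (m-1) * EE m (a i))" using ii by simp
    qed
    have "(\<Sum>i\<in>I. w i * ((m-1) * EE m a0 - (m-1) * EE m (a i))) = (m-1) * (sum w I * EE m a0 - (\<Sum>i\<in>I. w i * EE m (a i)))"
      using fin by (induct I rule: finite_induct) (simp_all add: algebra_simps)
    also have "\<dots> = 0" using s S by simp
    finally have "\<forall>i\<in>I. w i * ((m-1) * EE m a0 - (m-1) * EE m (a i)) = 0"
      using iffD1[OF sum_nonneg_eq_0_iff[OF fin]] nn by (metis (no_types, lifting))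
    then have eq: "\<forall>i\<in>I. w i * EE m (k * a i) = w i * EE m (k * a0)"
    proof (intro ballI)
      fix i assume "\<forall>i\<in>I. w i * ((m-1) * EE m a0 - (m-1) * EE m (a i)) = 0" "i \<in> I"
      then have z0: "w i * ((m-1) * EE m a0 - (m-1) * EE m (a i)) = 0" by auto
      have ii: "w i \<ge> 0" "0 \<le> a i" "a i \<le> 1" using i \<open>i \<in> I\<close> by auto
      show "w i * EE m (k * a i) = w i * EE m (k * a0)"
      proof (cases "w i = 0")
        case False
        then have "(m-1) * EE m a0 - (m-1) * EE m (a i) = 0" using z0 by simp
        then have "(m-1) * EE m (a i) = (m-1) * EE m a0" by linarith
        show ?thesis
        proof (cases "a i = a0")
          case False
          then have "a i < a0" using 3 ii by linarith
          then have "(m-1) * EE m (a i) < (m-1) * EE m a0" using EE_mono_strict[OF m, of "a i" a0] 3 ii by blast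
          then show ?thesis using \<open>(m-1) * EE m (a i) = (m-1) * EE m a0\<close> by linarith
        qed simp
      qed simp
    qed
    have "(\<Sum>i\<in>I. w i * EE m (k * a i)) = (\<Sum>i\<in>I. w i * EE m (k * a0))"
      by (rule sum.cong) (use eq in auto)
    then have "GG m I w a k = sum w I * EE m (k * a0) / 2"
      unfolding GG_def by (simp add: sum_distrib_right)
    then have "GG m I w a k - sum w I * EE m (k * a0) / 2 = 0" by linarith
    then show ?thesis by (metis mult_zero_right order_refl)
  qed
qed

lemma prof_chord:
  fixes \<theta> \<zeta> m k :: real
  assumes p: "profile m I w a" and m: "m > 0" "m \<noteq> 1"
    and z: "\<zeta> = 1 \<or> \<zeta> = -1" "\<zeta>*(m-2)*(m-3) \<le> 0" and th: "\<theta>*\<zeta>*(m-1) > 0"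
    and k: "0 \<le> k" "k \<le> 1"
  shows "\<theta> * (2 * GG m I w a k - 2 * sum w I - (EE m k - 2)/(EE m 1 - 2) * (2 - 2 * sum w I)) \<le> 0"
proof -
  have fin: "finite I" and i: "\<And>i. i \<in> I \<Longrightarrow> w i \<ge> 0 \<and> 0 \<le> a i \<and> a i \<le> 1"
    and s: "(\<Sum>i\<in>I. w i * EE m (a i)) = 2" using p unfolding profile_def by auto
  define c where "c = (EE m k - 2)/(EE m 1 - 2)"
  have t: "\<theta>*(w i * EE m (k * a i) - 2 * w i - c * (w i * EE m (a i) - 2 * w i)) \<le> 0"
    if "i \<in> I" for i
  proof -
    have ii: "w i \<ge> 0" "0 \<le> a i" "a i \<le> 1" using i[OF that] by auto
    have "\<theta>*(EE m (k*a i) - 2 - c * (EE m (a i) - 2)) \<le> 0"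
      unfolding c_def using E_chord[OF m z th k ii(2,3)] by auto
    then have "w i * (\<theta>*(EE m (k*a i) - 2 - c * (EE m (a i) - 2))) \<le> 0"
      using ii by (simp add: mult_nonneg_nonpos)
    then show ?thesis by (simp add: algebra_simps)
  qed
  have "(\<Sum>i\<in>I. \<theta>*(w i * EE m (k * a i) - 2 * w i - c * (w i * EE m (a i) - 2 * w i))) \<le> 0"
    using t by (simp add: sum_nonpos)
  moreover have "(\<Sum>i\<in>I. \<theta>*(w i * EE m (k * a i) - 2 * w i - c * (w i * EE m (a i) - 2 * w i)))
     = \<theta> * ((\<Sum>i\<in>I. w i * EE m (k * a i)) - 2 * sum w I - c * ((\<Sum>i\<in>I. w i * EE m (a i)) - 2 * sum w I))"
    using fin by (induct I rule: finite_induct) (simp_all add: algebra_simps)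
  ultimately show ?thesis using s unfolding GG_def c_def by simp
qed




definition FF :: "real \<Rightarrow> (bool \<Rightarrow> real) \<Rightarrow> (bool \<Rightarrow> int \<Rightarrow> real) \<Rightarrow> int set \<Rightarrow> real" where
  "FF \<alpha> P Wc Y = (\<Sum>y\<in>Y. (\<Sum>x\<in>UNIV. P x * (Wc x y) powr \<alpha>) powr (1 / \<alpha>))"

lemma sibson_FF: "sibson_MI \<alpha> P Wc Y = \<alpha> / (\<alpha> - 1) * ln (FF \<alpha> P Wc Y)"
  unfolding sibson_MI_def FF_def ..

lemma sum_bool: "(\<Sum>x\<in>(UNIV::bool set). f x) = f False + f True"
  by (simp add: UNIV_bool)

lemma EE_abs: "EE m x = EE m \<bar>x\<bar>"
  by (cases "x \<ge> 0") (auto simp: EE_even[of m x, symmetric])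

lemma pair_EE:
  fixes m p q U V :: real
  assumes "m > 0" "0 \<le> p" "0 \<le> q" "p + q = 1" "0 \<le> U" "0 \<le> V"
  shows "(p*U + q*V) powr m + (q*U + p*V) powr m = ((U+V)/2) powr m * EE m ((p-q) * ((U-V)/(U+V)))"
proof (cases "U + V = 0")
  case True
  then have "U = 0" "V = 0" using assms by auto
  then show ?thesis using assms by simp
next
  case False
  then have S: "U + V > 0" using assms by simp
  define R where "R = (U+V)/2"
  define t where "t = (U-V)/(U+V)"
  have R: "R > 0" using S R_def by simp
  have ta: "\<bar>t\<bar> \<le> 1" unfolding t_def using S assms by (simp add: abs_le_iff divide_le_eq_1 abs_divide) 
  have ka: "\<bar>p - q\<bar> \<le> 1" using assms by (simp add: abs_le_iff)
  have kt: "\<bar>(p-q)*t\<bar> \<le> 1" using ta ka by (simp add: abs_mult mult_le_one)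
  have qe: "q = 1 - p" using assms(4) by simp
  have e1: "p*U + q*V = R * (1 + (p-q)*t)" unfolding R_def t_def qe using S
    by (simp add: field_simps)
  have e2: "q*U + p*V = R * (1 - (p-q)*t)" unfolding R_def t_def qe using S
    by (simp add: field_simps)
  have n1: "0 \<le> 1 + (p-q)*t" "0 \<le> 1 - (p-q)*t" using kt by (auto simp: abs_le_iff)
  have "(R * (1 + (p-q)*t)) powr m = R powr m * (1 + (p-q)*t) powr m"
    using R n1 by (simp add: powr_mult)
  moreover have "(R * (1 - (p-q)*t)) powr m = R powr m * (1 - (p-q)*t) powr m"
    using R n1 by (simp add: powr_mult)
  ultimately show ?thesis unfolding e1 e2 EE_def R_def[symmetric] t_def[symmetric]
    by (simp only: distrib_left)
qed




definition wW :: "real \<Rightarrow> (bool \<Rightarrow> int \<Rightarrow> real) \<Rightarrow> int \<Rightarrow> real" where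
  "wW \<alpha> W y = ((W False y powr \<alpha> + W True y powr \<alpha>)/2) powr (1/\<alpha>)"
definition aW :: "real \<Rightarrow> (bool \<Rightarrow> int \<Rightarrow> real) \<Rightarrow> int \<Rightarrow> real" where
  "aW \<alpha> W y = \<bar>(W False y powr \<alpha> - W True y powr \<alpha>)/(W False y powr \<alpha> + W True y powr \<alpha>)\<bar>"

lemma sum_reflect:
  fixes f :: "int \<Rightarrow> real"
  shows "(\<Sum>y\<in>biso_out l. f (-y)) = (\<Sum>y\<in>biso_out l. f y)"
  by (rule sum.reindex_bij_witness[of _ uminus uminus]) (auto simp: biso_out_def)

lemma pair_EE_abs:
  fixes m p q U V :: real
  assumes "m > 0" "0 \<le> p" "0 \<le> q" "p + q = 1" "0 \<le> U" "0 \<le> V"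
  shows "(p*U + q*V) powr m + (q*U + p*V) powr m = ((U+V)/2) powr m * EE m (\<bar>p-q\<bar> * \<bar>(U-V)/(U+V)\<bar>)"
  using pair_EE[OF assms] EE_abs[of m "(p-q) * ((U-V)/(U+V))"] by (simp add: abs_mult)

lemma W_FF:
  assumes "\<alpha> > 0" "is_biso l W" "input_dist P"
  shows "FF \<alpha> P W (biso_out l) = GG (1/\<alpha>) (biso_out l) (wW \<alpha> W) (aW \<alpha> W) \<bar>P False - P True\<bar>"
proof -
  define p where "p = P False"
  define q where "q = P True"
  have pq: "0 \<le> p" "0 \<le> q" "p + q = 1" using assms(3) unfolding input_dist_def p_def q_def by auto
  have sym: "W False y = W True (-y)" "W True y = W False (-y)" for y
    using assms(2) unfolding is_biso_def by (metis minus_minus)+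
  have nn: "W x y \<ge> 0" for x y using assms(2) unfolding is_biso_def by auto
  define f where "f y = (p * W False y powr \<alpha> + q * W True y powr \<alpha>) powr (1/\<alpha>)" for y
  have FFf: "FF \<alpha> P W (biso_out l) = (\<Sum>y\<in>biso_out l. f y)"
    unfolding FF_def f_def sum_bool p_def q_def ..
  have fr: "f (-y) = (q * W False y powr \<alpha> + p * W True y powr \<alpha>) powr (1/\<alpha>)" for y
    unfolding f_def using sym[of "-y"] by (simp add: add.commute)
  have "2 * FF \<alpha> P W (biso_out l) = (\<Sum>y\<in>biso_out l. f y) + (\<Sum>y\<in>biso_out l. f (-y))"
    unfolding FFf sum_reflect by simp
  also have "\<dots> = (\<Sum>y\<in>biso_out l. f y + f (-y))" by (simp add: sum.distrib)
  also have "\<dots> = (\<Sum>y\<in>biso_out l. wW \<alpha> W y * EE (1/\<alpha>) (\<bar>p-q\<bar> * aW \<alpha> W y))"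
  proof (rule sum.cong)
    fix y
    have "f y + f (-y) = (p * W False y powr \<alpha> + q * W True y powr \<alpha>) powr (1/\<alpha>) + (q * W False y powr \<alpha> + p * W True y powr \<alpha>) powr (1/\<alpha>)"
      using fr[of y] by (simp add: f_def)
    also have "\<dots> = wW \<alpha> W y * EE (1/\<alpha>) (\<bar>p-q\<bar> * aW \<alpha> W y)"
      unfolding wW_def aW_def
      using pair_EE_abs[of "1/\<alpha>" p q "W False y powr \<alpha>" "W True y powr \<alpha>"] pq assms(1) by simp
    finally show "f y + f (-y) = wW \<alpha> W y * EE (1/\<alpha>) (\<bar>p-q\<bar> * aW \<alpha> W y)" .
  qed simp
  finally show ?thesis unfolding GG_def p_def q_def by simp
qed

lemma W_profile:
  assumes "\<alpha> > 0" "is_biso l W"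
  shows "profile (1/\<alpha>) (biso_out l) (wW \<alpha> W) (aW \<alpha> W)"
proof -
  have sym: "W False y = W True (-y)" "W True y = W False (-y)" for y
    using assms(2) unfolding is_biso_def by (metis minus_minus)+
  have nn: "W x y \<ge> 0" for x y using assms(2) unfolding is_biso_def by auto
  have s1: "(\<Sum>y\<in>biso_out l. W x y) = 1" for x using assms(2) unfolding is_biso_def by auto
  have pw: "(W x y powr \<alpha>) powr (1/\<alpha>) = W x y" for x y
    using nn[of x y] assms(1) by (simp add: powr_powr)
  have a01: "0 \<le> aW \<alpha> W y \<and> aW \<alpha> W y \<le> 1" for y
  proof -
    have "0 \<le> W False y powr \<alpha>" "0 \<le> W True y powr \<alpha>" by simp_all
    then have "\<bar>W False y powr \<alpha> - W True y powr \<alpha>\<bar> \<le> \<bar>W False y powr \<alpha> + W True y powr \<alpha>\<bar>" by (simp add: abs_le_iff)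
    moreover have "0 \<le> W False y powr \<alpha> + W True y powr \<alpha>" by simp
    ultimately show ?thesis unfolding aW_def abs_divide
      by (cases "W False y powr \<alpha> + W True y powr \<alpha> = 0") (auto simp: divide_le_eq_1)
  qed
  have "(\<Sum>y\<in>biso_out l. wW \<alpha> W y * EE (1/\<alpha>) (aW \<alpha> W y))
      = (\<Sum>y\<in>biso_out l. (W False y powr \<alpha>) powr (1/\<alpha>) + (W True y powr \<alpha>) powr (1/\<alpha>))"
  proof (rule sum.cong)
    fix y
    show "wW \<alpha> W y * EE (1/\<alpha>) (aW \<alpha> W y) = (W False y powr \<alpha>) powr (1/\<alpha>) + (W True y powr \<alpha>) powr (1/\<alpha>)"
      unfolding wW_def aW_def
      using pair_EE_abs[of "1/\<alpha>" 1 0 "W False y powr \<alpha>" "W True y powr \<alpha>"] assms(1) by simp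
  qed simp
  also have "\<dots> = 2" unfolding pw by (simp add: sum.distrib s1)
  finally show ?thesis unfolding profile_def using a01
    by (auto simp: biso_out_def wW_def)
qed




definition w0 :: "real \<Rightarrow> real \<Rightarrow> real" where
  "w0 \<alpha> \<delta> = 2 * ((((1-\<delta>) powr \<alpha> + \<delta> powr \<alpha>)/2) powr (1/\<alpha>))"
definition a0 :: "real \<Rightarrow> real \<Rightarrow> real" where
  "a0 \<alpha> \<delta> = \<bar>((1-\<delta>) powr \<alpha> - \<delta> powr \<alpha>)/((1-\<delta>) powr \<alpha> + \<delta> powr \<alpha>)\<bar>"

lemma BSC_FF:
  assumes "\<alpha> > 0" "input_dist P"
  shows "FF \<alpha> P (BSC \<delta>) BSC_out = GG (1/\<alpha>) {0::int} (\<lambda>_. w0 \<alpha> \<delta>) (\<lambda>_. a0 \<alpha> \<delta>) \<bar>P False - P True\<bar>"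
proof -
  define p where "p = P False"
  define q where "q = P True"
  have pq: "0 \<le> p" "0 \<le> q" "p + q = 1" using assms(2) unfolding input_dist_def p_def q_def by auto
  have "FF \<alpha> P (BSC \<delta>) BSC_out = (p * (1-\<delta>) powr \<alpha> + q * \<delta> powr \<alpha>) powr (1/\<alpha>) + (q * (1-\<delta>) powr \<alpha> + p * \<delta> powr \<alpha>) powr (1/\<alpha>)"
    unfolding FF_def BSC_out_def sum_bool p_def q_def by (simp add: BSC_def bit_def add.commute)
  also have "\<dots> = GG (1/\<alpha>) {0::int} (\<lambda>_. w0 \<alpha> \<delta>) (\<lambda>_. a0 \<alpha> \<delta>) \<bar>p - q\<bar>"
    unfolding GG_def w0_def a0_def
    using pair_EE_abs[of "1/\<alpha>" p q "(1-\<delta>) powr \<alpha>" "\<delta> powr \<alpha>"] pq assms(1) by simp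
  finally show ?thesis unfolding p_def q_def .
qed

lemma BSC_profile:
  assumes "\<alpha> > 0" "0 \<le> \<delta>" "\<delta> \<le> 1"
  shows "profile (1/\<alpha>) {0::int} (\<lambda>_. w0 \<alpha> \<delta>) (\<lambda>_. a0 \<alpha> \<delta>)"
    and "0 \<le> a0 \<alpha> \<delta>" "a0 \<alpha> \<delta> \<le> 1" "w0 \<alpha> \<delta> * EE (1/\<alpha>) (a0 \<alpha> \<delta>) = 2"
proof -
  have pw: "(x powr \<alpha>) powr (1/\<alpha>) = x" if "x \<ge> 0" for x
    using that assms(1) by (simp add: powr_powr)
  show a01: "0 \<le> a0 \<alpha> \<delta>" "a0 \<alpha> \<delta> \<le> 1"
  proof -
    define A where "A = (1-\<delta>) powr \<alpha>"
    define B where "B = \<delta> powr \<alpha>"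
    have AB: "0 \<le> A" "0 \<le> B" unfolding A_def B_def by simp_all
    have h: "\<bar>A - B\<bar> \<le> A + B" using AB by (simp add: abs_le_iff)
    have "\<bar>(A - B)/(A + B)\<bar> \<le> 1"
    proof (cases "A + B = 0")
      case False
      then have "A + B > 0" using AB by simp
      then show ?thesis using h by (simp add: abs_divide divide_le_eq_1_pos)
    qed simp
    then show "0 \<le> a0 \<alpha> \<delta>" "a0 \<alpha> \<delta> \<le> 1" unfolding a0_def A_def B_def by simp_all
  qed
  have "w0 \<alpha> \<delta> * EE (1/\<alpha>) (a0 \<alpha> \<delta>) = 2 * (((1-\<delta>) powr \<alpha>) powr (1/\<alpha>) + (\<delta> powr \<alpha>) powr (1/\<alpha>))"
    unfolding w0_def a0_def
    using pair_EE_abs[of "1/\<alpha>" 1 0 "(1-\<delta>) powr \<alpha>" "\<delta> powr \<alpha>"] assms(1) by simp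
  also have "\<dots> = 2" using assms pw[of "1-\<delta>"] pw[of \<delta>] by simp
  finally show w: "w0 \<alpha> \<delta> * EE (1/\<alpha>) (a0 \<alpha> \<delta>) = 2" .
  show "profile (1/\<alpha>) {0::int} (\<lambda>_. w0 \<alpha> \<delta>) (\<lambda>_. a0 \<alpha> \<delta>)"
    unfolding profile_def using a01 w by (simp add: w0_def)
qed

definition wE :: "real \<Rightarrow> real \<Rightarrow> int \<Rightarrow> real" where
  "wE \<alpha> \<epsilon> i = (if i = 0 then 2 * (1-\<epsilon>) * (1/2) powr (1/\<alpha>) else \<epsilon>)"
definition aE :: "int \<Rightarrow> real" where
  "aE i = (if i = 0 then 1 else 0)"

lemma BEC_FF:
  assumes "\<alpha> > 0" "input_dist P" "0 \<le> \<epsilon>" "\<epsilon> \<le> 1"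
  shows "FF \<alpha> P (BEC \<epsilon>) BEC_out = GG (1/\<alpha>) {0::int, 1} (wE \<alpha> \<epsilon>) aE \<bar>P False - P True\<bar>"
proof -
  define p where "p = P False"
  define q where "q = P True"
  define m where "m = 1/\<alpha>"
  have m: "m > 0" using assms m_def by simp
  have pq: "0 \<le> p" "0 \<le> q" "p + q = 1" using assms(2) unfolding input_dist_def p_def q_def by auto
  have pw: "(x powr \<alpha>) powr m = x" if "x \<ge> 0" for x
    using that assms(1) by (simp add: powr_powr m_def)
  have pm: "(c * x powr \<alpha>) powr m = c powr m * x" if "x \<ge> 0" "c \<ge> 0" for c x
    using that pw[of x] by (simp add: powr_mult)
  have "FF \<alpha> P (BEC \<epsilon>) BEC_out = (p * (1-\<epsilon>) powr \<alpha>) powr m + (q * (1-\<epsilon>) powr \<alpha>) powr m + ((p + q) * \<epsilon> powr \<alpha>) powr m"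
    unfolding FF_def BEC_out_def sum_bool p_def q_def m_def by (simp add: BEC_def bit_def algebra_simps)
  also have "\<dots> = (1-\<epsilon>) * (p powr m + q powr m) + \<epsilon>"
    using pm[of "1-\<epsilon>" p] pm[of "1-\<epsilon>" q] pw[of \<epsilon>] pq assms by (simp add: algebra_simps)
  also have "\<dots> = (1-\<epsilon>) * ((1/2) powr m * EE m \<bar>p - q\<bar>) + \<epsilon>"
    using pair_EE_abs[of m p q 1 0] pq m by simp
  also have "\<dots> = GG m {0::int, 1} (wE \<alpha> \<epsilon>) aE \<bar>p - q\<bar>"
    unfolding GG_def wE_def aE_def m_def by (simp add: EE_0)
  finally show ?thesis unfolding p_def q_def m_def .
qed

lemma half_powr: "(1/2::real) powr m * 2 powr m = 1"
  by (simp add: powr_mult[symmetric])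

lemma BEC_profile:
  assumes "\<alpha> > 0" "0 \<le> \<epsilon>" "\<epsilon> \<le> 1"
  shows "profile (1/\<alpha>) {0::int, 1} (wE \<alpha> \<epsilon>) aE"
    and "sum (wE \<alpha> \<epsilon>) {0::int, 1} = 2 * (1-\<epsilon>) * (1/2) powr (1/\<alpha>) + \<epsilon>"
proof -
  have "(\<Sum>i\<in>{0::int,1}. wE \<alpha> \<epsilon> i * EE (1/\<alpha>) (aE i)) = 2 * (1-\<epsilon>) * ((1/2) powr (1/\<alpha>) * 2 powr (1/\<alpha>)) + 2 * \<epsilon>"
    using assms by (simp add: wE_def aE_def EE_1 EE_0)
  also have "\<dots> = 2" by (simp only: half_powr) simp
  finally show "profile (1/\<alpha>) {0::int, 1} (wE \<alpha> \<epsilon>) aE"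
    unfolding profile_def using assms by (auto simp: wE_def aE_def)
  show "sum (wE \<alpha> \<epsilon>) {0::int, 1} = 2 * (1-\<epsilon>) * (1/2) powr (1/\<alpha>) + \<epsilon>"
    by (simp add: wE_def)
qed




lemma cmp_ln:
  fixes \<alpha> G1 G2 :: real
  assumes "\<alpha> > 0" "\<alpha> \<noteq> 1" "G1 > 0" "G2 > 0" "(1/\<alpha> - 1) * (G2 - G1) \<ge> 0"
  shows "\<alpha> / (\<alpha> - 1) * ln G1 \<ge> \<alpha> / (\<alpha> - 1) * ln G2"
proof (cases "\<alpha> > 1")
  case True
  then have "1/\<alpha> - 1 < 0" by (simp add: field_simps)
  then have "G2 \<le> G1" using assms(5) by (simp add: mult_le_0_iff zero_le_mult_iff)
  then have "ln G2 \<le> ln G1" using assms by simp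
  moreover have "\<alpha> / (\<alpha> - 1) > 0" using True by simp
  ultimately show ?thesis using mult_left_mono[of "ln G2" "ln G1" "\<alpha> / (\<alpha> - 1)"] by linarith
next
  case False
  then have a1: "\<alpha> < 1" using assms by simp
  then have "1/\<alpha> - 1 > 0" using assms by (simp add: field_simps)
  then have "G1 \<le> G2" using assms(5) by (simp add: zero_le_mult_iff)
  then have "ln G1 \<le> ln G2" using assms by simp
  moreover have "\<alpha> / (\<alpha> - 1) < 0" using a1 assms by (simp add: divide_pos_neg)
  ultimately show ?thesis using mult_left_mono_neg[of "ln G1" "ln G2" "\<alpha> / (\<alpha> - 1)"] by linarith
qed

lemma input_dist_k:
  assumes "input_dist P" shows "0 \<le> \<bar>P False - P True\<bar>" "\<bar>P False - P True\<bar> \<le> 1"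
proof -
  have "P False \<ge> 0" "P True \<ge> 0" "P False + P True = 1" using assms unfolding input_dist_def by auto
  then show "0 \<le> \<bar>P False - P True\<bar>" "\<bar>P False - P True\<bar> \<le> 1" by (auto simp: abs_le_iff)
qed

lemma cap_profile:
  fixes \<alpha> :: real and Wc :: "bool \<Rightarrow> int \<Rightarrow> real"
  assumes a: "\<alpha> > 0" "\<alpha> \<noteq> 1" and p: "profile (1/\<alpha>) I w a"
    and F: "\<And>P. input_dist P \<Longrightarrow> FF \<alpha> P Wc Yc = GG (1/\<alpha>) I w a \<bar>P False - P True\<bar>"
  shows "alpha_capacity \<alpha> Wc Yc = \<alpha> / (\<alpha> - 1) * ln (sum w I)"
proof -
  define Ph :: "bool \<Rightarrow> real" where "Ph = (\<lambda>_. 1/2)"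
  have Ph: "input_dist Ph" unfolding input_dist_def Ph_def by simp
  have m: "1/\<alpha> > 0" "1/\<alpha> \<noteq> 1" using a by auto
  have vh: "sibson_MI \<alpha> Ph Wc Yc = \<alpha> / (\<alpha> - 1) * ln (sum w I)"
    unfolding sibson_FF F[OF Ph] by (simp add: Ph_def GG_0)
  have le: "sibson_MI \<alpha> P Wc Yc \<le> \<alpha> / (\<alpha> - 1) * ln (sum w I)" if "input_dist P" for P
  proof -
    note k = input_dist_k[OF that]
    have "\<alpha> / (\<alpha> - 1) * ln (GG (1/\<alpha>) I w a 0) \<ge> \<alpha> / (\<alpha> - 1) * ln (GG (1/\<alpha>) I w a \<bar>P False - P True\<bar>)"
      using cmp_ln[OF a prof_pos[OF p order_refl] prof_pos[OF p k]] prof_cap[OF p m k] by simp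
    then show ?thesis unfolding sibson_FF F[OF that] GG_0 .
  qed
  have mem: "\<alpha> / (\<alpha> - 1) * ln (sum w I) \<in> (\<lambda>P. sibson_MI \<alpha> P Wc Yc) ` {P. input_dist P}"
    using Ph vh by (metis (mono_tags) image_eqI mem_Collect_eq)
  show ?thesis unfolding alpha_capacity_def
    by (rule cSup_eq_maximum[OF mem]) (use le in auto)
qed

lemma chord_alg:
  fixes S h E1 Ek \<epsilon> :: real
  assumes "h * E1 = 1" "E1 \<noteq> 2" "S = 2 * (1-\<epsilon>) * h + \<epsilon>"
  shows "2*S + (Ek - 2)/(E1 - 2) * (2 - 2*S) = 2*((1-\<epsilon>)*h*Ek + \<epsilon>)"
proof -
  have a: "2*(1-\<epsilon>)*h*(E1 - 2) = 2*(1-\<epsilon>)*(h*E1) - 4*(1-\<epsilon>)*h" by (simp add: algebra_simps)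
  have "2 - 2*S = 2*(1-\<epsilon>)*h*(E1 - 2)" unfolding a assms(1) assms(3) by (simp add: algebra_simps)
  then have r: "(Ek - 2)/(E1 - 2) * (2 - 2*S) = 2*(1-\<epsilon>)*h*(Ek - 2)" using assms(2) by simp
  show ?thesis by (subst r) (simp add: assms(3) algebra_simps)
qed




lemma key_ineqs:
  fixes \<alpha> \<delta> \<epsilon> \<theta> \<zeta> :: real and l :: nat and W :: "bool \<Rightarrow> int \<Rightarrow> real"
  assumes a: "\<alpha> > 0" "\<alpha> \<noteq> 1" and bi: "is_biso l W"
    and d: "0 \<le> \<delta>" "\<delta> \<le> 1" and e: "0 \<le> \<epsilon>" "\<epsilon> \<le> 1"
    and cB: "alpha_capacity \<alpha> W (biso_out l) = alpha_capacity \<alpha> (BSC \<delta>) BSC_out"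
    and cE: "alpha_capacity \<alpha> W (biso_out l) = alpha_capacity \<alpha> (BEC \<epsilon>) BEC_out"
    and z: "\<zeta> = 1 \<or> \<zeta> = -1" "\<zeta>*(1/\<alpha>-2)*(1/\<alpha>-3) \<le> 0" and th: "\<theta>*\<zeta>*(1/\<alpha>-1) > 0"
    and P: "input_dist P"
  shows "\<theta> * (FF \<alpha> P W (biso_out l) - FF \<alpha> P (BSC \<delta>) BSC_out) \<ge> 0"
    and "\<theta> * (FF \<alpha> P (BEC \<epsilon>) BEC_out - FF \<alpha> P W (biso_out l)) \<ge> 0"
    and "FF \<alpha> P W (biso_out l) > 0" "FF \<alpha> P (BSC \<delta>) BSC_out > 0" "FF \<alpha> P (BEC \<epsilon>) BEC_out > 0"
proof -
  define m where "m = 1/\<alpha>"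
  have m: "m > 0" "m \<noteq> 1" using a m_def by auto
  note pW = W_profile[OF a(1) bi, folded m_def]
  note pB = BSC_profile[OF a(1) d, folded m_def]
  note pE = BEC_profile[OF a(1) e, folded m_def]
  have FW: "\<And>P. input_dist P \<Longrightarrow> FF \<alpha> P W (biso_out l) = GG m (biso_out l) (wW \<alpha> W) (aW \<alpha> W) \<bar>P False - P True\<bar>"
    using W_FF[OF a(1) bi] m_def by simp
  have FB: "\<And>P. input_dist P \<Longrightarrow> FF \<alpha> P (BSC \<delta>) BSC_out = GG m {0::int} (\<lambda>_. w0 \<alpha> \<delta>) (\<lambda>_. a0 \<alpha> \<delta>) \<bar>P False - P True\<bar>"
    using BSC_FF[OF a(1)] m_def by simp
  have FE: "\<And>P. input_dist P \<Longrightarrow> FF \<alpha> P (BEC \<epsilon>) BEC_out = GG m {0::int, 1} (wE \<alpha> \<epsilon>) aE \<bar>P False - P True\<bar>"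
    using BEC_FF[OF a(1) _ e] m_def by simp
  have capW: "alpha_capacity \<alpha> W (biso_out l) = \<alpha> / (\<alpha> - 1) * ln (sum (wW \<alpha> W) (biso_out l))"
    using cap_profile[OF a, of "biso_out l" "wW \<alpha> W" "aW \<alpha> W" W "biso_out l"] pW FW m_def by simp
  have capB: "alpha_capacity \<alpha> (BSC \<delta>) BSC_out = \<alpha> / (\<alpha> - 1) * ln (sum (\<lambda>_. w0 \<alpha> \<delta>) {0::int})"
    using cap_profile[OF a, of "{0::int}" "\<lambda>_. w0 \<alpha> \<delta>" "\<lambda>_. a0 \<alpha> \<delta>" "BSC \<delta>" BSC_out] pB(1) FB m_def by simp
  have capE: "alpha_capacity \<alpha> (BEC \<epsilon>) BEC_out = \<alpha> / (\<alpha> - 1) * ln (sum (wE \<alpha> \<epsilon>) {0::int, 1})"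
    using cap_profile[OF a, of "{0::int, 1}" "wE \<alpha> \<epsilon>" aE "BEC \<epsilon>" BEC_out] pE(1) FE m_def by simp
  have SW: "sum (wW \<alpha> W) (biso_out l) > 0" using prof_pos[OF pW, of 0] by (simp add: GG_0)
  have SB: "sum (\<lambda>_. w0 \<alpha> \<delta>) {0::int} > 0" using prof_pos[OF pB(1), of 0] by (simp add: GG_0)
  have SE: "sum (wE \<alpha> \<epsilon>) {0::int, 1} > 0" using prof_pos[OF pE(1), of 0] by (simp add: GG_0)
  have c0: "\<alpha> / (\<alpha> - 1) \<noteq> 0" using a by simp
  have eqB: "sum (wW \<alpha> W) (biso_out l) = w0 \<alpha> \<delta>"
  proof -
    have "ln (sum (wW \<alpha> W) (biso_out l)) = ln (sum (\<lambda>_. w0 \<alpha> \<delta>) {0::int})"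
      using cB capW capB c0 by simp
    then show ?thesis using SW SB by simp
  qed
  have eqE: "sum (wW \<alpha> W) (biso_out l) = sum (wE \<alpha> \<epsilon>) {0::int, 1}"
  proof -
    have "ln (sum (wW \<alpha> W) (biso_out l)) = ln (sum (wE \<alpha> \<epsilon>) {0::int, 1})"
      using cE capW capE c0 by simp
    then show ?thesis using SW SE by simp
  qed
  note k = input_dist_k[OF P]
  define k where "k = \<bar>P False - P True\<bar>"
  have k01: "0 \<le> k" "k \<le> 1" using k k_def by auto
  have zz: "\<zeta>*(m-2)*(m-3) \<le> 0" "\<theta>*\<zeta>*(m-1) > 0" using z th m_def by auto
  show "FF \<alpha> P W (biso_out l) > 0" unfolding FW[OF P] using prof_pos[OF pW k] .
  show "FF \<alpha> P (BSC \<delta>) BSC_out > 0" unfolding FB[OF P] using prof_pos[OF pB(1) k] .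
  show "FF \<alpha> P (BEC \<epsilon>) BEC_out > 0" unfolding FE[OF P] using prof_pos[OF pE(1) k] .
  have S0: "sum (wW \<alpha> W) (biso_out l) * EE m (a0 \<alpha> \<delta>) = 2" using eqB pB(4) by simp
  have T: "\<theta> * (GG m (biso_out l) (wW \<alpha> W) (aW \<alpha> W) k - sum (wW \<alpha> W) (biso_out l) * EE m (k * a0 \<alpha> \<delta>) / 2) \<ge> 0"
    using prof_tangent[OF pW m z(1) zz(1) zz(2) k01 pB(2) pB(3) S0] .
  have GB: "GG m {0::int} (\<lambda>_. w0 \<alpha> \<delta>) (\<lambda>_. a0 \<alpha> \<delta>) k = sum (wW \<alpha> W) (biso_out l) * EE m (k * a0 \<alpha> \<delta>) / 2"
    unfolding GG_def eqB by simp
  show "\<theta> * (FF \<alpha> P W (biso_out l) - FF \<alpha> P (BSC \<delta>) BSC_out) \<ge> 0"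
    unfolding FW[OF P] FB[OF P] k_def[symmetric] GB using T .
  have C: "\<theta> * (2 * GG m (biso_out l) (wW \<alpha> W) (aW \<alpha> W) k - 2 * sum (wW \<alpha> W) (biso_out l)
        - (EE m k - 2)/(EE m 1 - 2) * (2 - 2 * sum (wW \<alpha> W) (biso_out l))) \<le> 0"
    using prof_chord[OF pW m z(1) zz(1) zz(2) k01] .
  have alg: "2 * sum (wW \<alpha> W) (biso_out l) + (EE m k - 2)/(EE m 1 - 2) * (2 - 2 * sum (wW \<alpha> W) (biso_out l))
      = 2 * ((1-\<epsilon>) * (1/2) powr m * EE m k + \<epsilon>)"
    by (rule chord_alg) (use EE_1[OF m(1)] half_powr[of m] EE_1_ne[OF m] eqE pE(2) m_def in auto)
  have GE: "GG m {0::int, 1} (wE \<alpha> \<epsilon>) aE k = (1-\<epsilon>) * (1/2) powr m * EE m k + \<epsilon>"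
    unfolding GG_def wE_def aE_def m_def by (simp add: EE_0)
  have "\<theta> * (2 * GG m (biso_out l) (wW \<alpha> W) (aW \<alpha> W) k - 2 * GG m {0::int, 1} (wE \<alpha> \<epsilon>) aE k) \<le> 0"
    using C unfolding GE alg[symmetric] by (simp add: algebra_simps)
  then show "\<theta> * (FF \<alpha> P (BEC \<epsilon>) BEC_out - FF \<alpha> P W (biso_out l)) \<ge> 0"
    unfolding FW[OF P] FE[OF P] k_def[symmetric] by (simp add: algebra_simps)
qed




theorem corollary2:
  fixes \<alpha> \<delta> \<epsilon> :: real and l :: nat and W :: "bool \<Rightarrow> int \<Rightarrow> real"
  assumes "\<alpha> > 0" and "\<alpha> \<noteq> 1"
    and "is_biso l W"
    and "0 \<le> \<delta>" and "\<delta> \<le> 1"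
    and "0 \<le> \<epsilon>" and "\<epsilon> \<le> 1"
    and "alpha_capacity \<alpha> W (biso_out l) = alpha_capacity \<alpha> (BSC \<delta>) BSC_out"
    and "alpha_capacity \<alpha> W (biso_out l) = alpha_capacity \<alpha> (BEC \<epsilon>) BEC_out"
  shows "((\<alpha> > 1 \<or> (1/2 \<le> \<alpha> \<and> \<alpha> < 1) \<or> \<alpha> \<le> 1/3) \<longrightarrow>
           more_capable \<alpha> (BEC \<epsilon>) BEC_out W (biso_out l) \<and>
           more_capable \<alpha> W (biso_out l) (BSC \<delta>) BSC_out) \<and>
         ((1/3 \<le> \<alpha> \<and> \<alpha> \<le> 1/2) \<longrightarrow>
           more_capable \<alpha> (BSC \<delta>) BSC_out W (biso_out l) \<and>
           more_capable \<alpha> W (biso_out l) (BEC \<epsilon>) BEC_out)"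
proof -
  note a = assms(1,2)
  have aux: "c * (-x) \<ge> 0" if "c \<noteq> 0" "(if c > 0 then -1 else 1) * x \<ge> 0" for c x :: real
  proof (cases "c > 0")
    case True then show ?thesis using that by (simp add: mult_nonneg_nonpos)
  next
    case False then have "c < 0" using that by simp
    then show ?thesis using that False by (simp add: mult_nonpos_nonneg)
  qed
  have c0: "1/\<alpha> - 1 \<noteq> 0" using a by simp
  show ?thesis
  proof (intro conjI impI)
    assume h1: "\<alpha> > 1 \<or> (1/2 \<le> \<alpha> \<and> \<alpha> < 1) \<or> \<alpha> \<le> 1/3"
    define \<theta> where "\<theta> = (if 1/\<alpha> - 1 > 0 then -1 else (1::real))"
    have z: "(-1::real) = 1 \<or> (-1::real) = -1" by simp
    have zz: "(-1)*(1/\<alpha>-2)*(1/\<alpha>-3) \<le> 0"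
    proof -
      have "(1/\<alpha>-2)*(1/\<alpha>-3) \<ge> 0"
      proof -
        consider "\<alpha> > 1" | "1/2 \<le> \<alpha>" "\<alpha> < 1" | "\<alpha> \<le> 1/3" using h1 by blast
        then show ?thesis
        proof cases
          case 1 then have "1/\<alpha> < 1" by simp
          then show ?thesis by (intro mult_nonpos_nonpos) auto
        next
          case 2 then have "1/\<alpha> \<le> 2" using a by (simp add: field_simps)
          then show ?thesis by (intro mult_nonpos_nonpos) auto
        next
          case 3 then have "1/\<alpha> \<ge> 3" using a by (simp add: field_simps)
          then show ?thesis by (intro mult_nonneg_nonneg) auto
        qed
      qed
      then show ?thesis by (simp only: mult_minus1 neg_le_0_iff_le)
    qed
    have th: "\<theta>*(-1)*(1/\<alpha>-1) > 0"
    proof (cases "1/\<alpha> - 1 > 0")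
      case True then show ?thesis unfolding \<theta>_def by simp
    next
      case False then have "1/\<alpha> - 1 < 0" using c0 by linarith
      then show ?thesis unfolding \<theta>_def using False by simp
    qed
    note K = key_ineqs[OF assms z zz th]
    show "more_capable \<alpha> (BEC \<epsilon>) BEC_out W (biso_out l)" unfolding more_capable_def
    proof (intro allI impI)
      fix P assume P: "input_dist P"
      have "(1/\<alpha> - 1) * (- (FF \<alpha> P (BEC \<epsilon>) BEC_out - FF \<alpha> P W (biso_out l))) \<ge> 0"
        using aux[OF c0] K(2)[OF P] unfolding \<theta>_def by blast
      then have "(1/\<alpha> - 1) * (FF \<alpha> P W (biso_out l) - FF \<alpha> P (BEC \<epsilon>) BEC_out) \<ge> 0" by simp
      then show "sibson_MI \<alpha> P (BEC \<epsilon>) BEC_out \<ge> sibson_MI \<alpha> P W (biso_out l)"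
        unfolding sibson_FF using cmp_ln[OF a K(5)[OF P] K(3)[OF P]] by blast
    qed
    show "more_capable \<alpha> W (biso_out l) (BSC \<delta>) BSC_out" unfolding more_capable_def
    proof (intro allI impI)
      fix P assume P: "input_dist P"
      have "(1/\<alpha> - 1) * (- (FF \<alpha> P W (biso_out l) - FF \<alpha> P (BSC \<delta>) BSC_out)) \<ge> 0"
        using aux[OF c0] K(1)[OF P] unfolding \<theta>_def by blast
      then have "(1/\<alpha> - 1) * (FF \<alpha> P (BSC \<delta>) BSC_out - FF \<alpha> P W (biso_out l)) \<ge> 0" by simp
      then show "sibson_MI \<alpha> P W (biso_out l) \<ge> sibson_MI \<alpha> P (BSC \<delta>) BSC_out"
        unfolding sibson_FF using cmp_ln[OF a K(3)[OF P] K(4)[OF P]] by blast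
    qed
  next
    assume h2: "1/3 \<le> \<alpha> \<and> \<alpha> \<le> 1/2"
    have m2: "1/\<alpha> \<ge> 2" "1/\<alpha> \<le> 3" using h2 a by (simp_all add: field_simps)
    have z: "(1::real) = 1 \<or> (1::real) = -1" by simp
    have zz: "1*(1/\<alpha>-2)*(1/\<alpha>-3) \<le> 0" using m2 by (simp add: mult_nonneg_nonpos)
    have th: "1*1*(1/\<alpha>-1) > 0" using m2 by simp
    have cp: "1/\<alpha> - 1 > 0" using m2 by simp
    note K = key_ineqs[OF assms z zz th]
    show "more_capable \<alpha> (BSC \<delta>) BSC_out W (biso_out l)" unfolding more_capable_def
    proof (intro allI impI)
      fix P assume P: "input_dist P"
      have "(1/\<alpha> - 1) * (FF \<alpha> P W (biso_out l) - FF \<alpha> P (BSC \<delta>) BSC_out) \<ge> 0"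
        using K(1)[OF P] cp by simp
      then show "sibson_MI \<alpha> P (BSC \<delta>) BSC_out \<ge> sibson_MI \<alpha> P W (biso_out l)"
        unfolding sibson_FF using cmp_ln[OF a K(4)[OF P] K(3)[OF P]] by blast
    qed
    show "more_capable \<alpha> W (biso_out l) (BEC \<epsilon>) BEC_out" unfolding more_capable_def
    proof (intro allI impI)
      fix P assume P: "input_dist P"
      have "(1/\<alpha> - 1) * (FF \<alpha> P (BEC \<epsilon>) BEC_out - FF \<alpha> P W (biso_out l)) \<ge> 0"
        using K(2)[OF P] cp by simp
      then show "sibson_MI \<alpha> P W (biso_out l) \<ge> sibson_MI \<alpha> P (BEC \<epsilon>) BEC_out"
        unfolding sibson_FF using cmp_ln[OF a K(3)[OF P] K(5)[OF P]] by blast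
    qed
  qed
qed


end
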